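(* Let $F$ be a distribution function on $\mathbb{R}$ with finite second moment which is log-concave, in the sense that $\log F(x)$ is a concave function on $J=\{x\in\mathbb{R}:0<F(x)<1\}$, and which has no atom at its right end-point $\omega(F)=\inf\{x\in\mathbb{R}:F(x)=1\}$. Let $X_1,X_2,\dots$ be i.i.d. with distribution function $F$, $X_{k:k}=\max\{X_1,\dots,X_k\}$, and $Z_i=X_{i+1:i+1}-X_{i:i}$ for $i\ge1$. Then $\operatorname{Cov}[Z_i,Z_j]\le 0$ for all $n\ge2$ and all $i\neq j$ with $i,j\in\{1,\dots,n-1\}$; that is, $F$ belongs to the class NCP.
   Context: The class NCP consists of the distribution functions $F$ with finite second moment whose partial maxima spacings $Z_i=X_{i+1:i+1}-X_{i:i}$ (for an i.i.d. sequence from $F$) satisfy $\operatorname{Cov}[Z_i,Z_j]\le0$ for all $i\ne j$, $i,j=1,\dots,n-1$, for every $n\ge2$. *)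

theory Defs
  imports "HOL-Probability.Probability"
begin

definition pmax :: "(nat \<Rightarrow> 'a \<Rightarrow> real) \<Rightarrow> nat \<Rightarrow> 'a \<Rightarrow> real" where
  "pmax X k = (\<lambda>w. Max ((\<lambda>j. X j w) ` {1..k}))"

definition pspacing :: "(nat \<Rightarrow> 'a \<Rightarrow> real) \<Rightarrow> nat \<Rightarrow> 'a \<Rightarrow> real" where
  "pspacing X i = (\<lambda>w. pmax X (Suc i) w - pmax X i w)"

definition covariance :: "'a measure \<Rightarrow> ('a \<Rightarrow> real) \<Rightarrow> ('a \<Rightarrow> real) \<Rightarrow> real" where
  "covariance M U V =
     (\<integral>w. (U w - (\<integral>v. U v \<partial>M)) * (V w - (\<integral>v. V v \<partial>M)) \<partial>M)"

text \<open>Right end-point omega(F) = inf {x. F x = 1}, when finite.\<close>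
definition right_endpoint :: "(real \<Rightarrow> real) \<Rightarrow> real" where
  "right_endpoint F = Inf {x. F x = 1}"

end

theory Submission
  imports Defs
begin

locale lcF =
  fixes mu :: "real measure" and F :: "real \<Rightarrow> real"
  assumes dist: "real_distribution mu"
    and F_def: "F = cdf mu"
    and lc: "concave_on {x. 0 < F x \<and> F x < 1} (\<lambda>x. ln (F x))"
    and na: "(\<exists>x. F x = 1) \<Longrightarrow> measure mu {right_endpoint F} = 0"
begin

interpretation rd: real_distribution mu by (rule dist)

lemma Fmono: "x \<le> y \<Longrightarrow> F x \<le> F y"
  unfolding F_def by (rule rd.cdf_nondecreasing)

lemma Fnn: "0 \<le> F x" unfolding F_def by (rule rd.cdf_nonneg)
lemma Fle1: "F x \<le> 1" unfolding F_def by (rule rd.cdf_bounded_prob)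

lemma Fdiff: "x < y \<Longrightarrow> F y - F x = measure mu {x<..y}"
  unfolding F_def by (rule rd.cdf_diff_eq)

lemma Fmeas[measurable]: "F \<in> borel_measurable borel"
  by (intro borel_measurable_mono) (auto simp: mono_def Fmono)

lemma Ftop: "(F \<longlongrightarrow> 1) at_top"
  unfolding F_def by (rule rd.cdf_lim_at_top_prob)

lemma Fbot: "(F \<longlongrightarrow> 0) at_bot"
  unfolding F_def by (rule rd.cdf_lim_at_bot)

lemma Fright: "continuous (at_right a) F"
  unfolding F_def by (rule rd.cdf_is_right_cont)

lemma F_isCont_iff: "isCont F x \<longleftrightarrow> measure mu {x} = 0"
  unfolding F_def by (rule rd.isCont_cdf)

lemma right_lt1: assumes "F u < 1" shows "\<exists>b>u. \<forall>z. z < b \<longrightarrow> F z < 1"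
proof -
  have "((\<lambda>z. F z) \<longlongrightarrow> F u) (at_right u)"
    using Fright[of u] by (simp add: continuous_within)
  then have "eventually (\<lambda>z. F z < 1) (at_right u)"
    using assms by (rule order_tendstoD)
  then obtain b where b: "b > u" "\<And>z. u < z \<Longrightarrow> z < b \<Longrightarrow> F z < 1"
    unfolding eventually_at_right_field by blast
  show ?thesis
  proof (intro exI[of _ b] conjI allI impI)
    fix z assume "z < b"
    show "F z < 1"
    proof (cases "z \<le> u")
      case True thus ?thesis using Fmono[OF True] assms by linarith
    next
      case False thus ?thesis using b \<open>z < b\<close> by auto
    qed
  qed (use b in simp)
qed

lemma cont_pos:
  assumes u': "u' < u" "0 < F u'"
  shows "isCont F u"
proof (cases "F u < 1")
  case True
  obtain b where b: "b > u" "\<And>z. z < b \<Longrightarrow> F z < 1" using right_lt1[OF True] by auto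
  define Op where "Op = {u'<..<b}"
  have OJ: "Op \<subseteq> {x. 0 < F x \<and> F x < 1}"
  proof
    fix z assume "z \<in> Op"
    then have "u' < z" "z < b" by (auto simp: Op_def)
    thus "z \<in> {x. 0 < F x \<and> F x < 1}" using Fmono[of u' z] u' b(2)[of z] by simp
  qed
  have opO: "open Op" and cvO: "convex Op" by (simp_all add: Op_def)
  have "concave_on Op (\<lambda>x. ln (F x))"
    using lc OJ cvO unfolding concave_on_def by (rule convex_on_subset)
  then have "continuous_on Op (\<lambda>x. - ln (F x))"
    unfolding concave_on_def using opO by (intro convex_on_continuous)
  then have "continuous_on Op (\<lambda>x. exp (- (- ln (F x))))"
    by (rule continuous_on_exp[OF continuous_on_minus])
  moreover have uO: "u \<in> Op" using u' b by (simp add: Op_def)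
  ultimately have "isCont (\<lambda>x. exp (- (- ln (F x)))) u"
    using opO by (simp add: continuous_on_eq_continuous_at)
  moreover have "eventually (\<lambda>x. F x = exp (- (- ln (F x)))) (nhds u)"
  proof -
    have "eventually (\<lambda>x. x \<in> Op) (nhds u)"
      using opO uO by (rule eventually_nhds_in_open)
    then show ?thesis by eventually_elim (use OJ in auto)
  qed
  then have "isCont F u = isCont (\<lambda>x. exp (- (- ln (F x)))) u" by (rule isCont_cong)
  ultimately show ?thesis by blast
next
  case False
  then have Fu: "F u = 1" using Fle1[of u] by linarith
  show ?thesis
  proof (cases "\<exists>w<u. F w = 1")
    case True
    then obtain w where w: "w < u" "F w = 1" by auto
    have "measure mu {u} \<le> measure mu {w<..u}"
      using w by (intro rd.finite_measure_mono) auto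
    also have "\<dots> = 0" using Fdiff[OF w(1)] w Fu by simp
    finally show ?thesis unfolding F_isCont_iff using measure_nonneg[of mu "{u}"] by linarith
  next
    case False
    have "right_endpoint F = u"
      unfolding right_endpoint_def
    proof (rule cInf_eq_minimum)
      show "u \<in> {x. F x = 1}" using Fu by simp
      fix x assume "x \<in> {x. F x = 1}"
      thus "u \<le> x" using False by (cases "x < u") auto
    qed
    then show ?thesis using na Fu F_isCont_iff by auto
  qed
qed

lemma four_point_J:
  assumes ab: "a \<le> b" and h: "0 \<le> h"
    and J: "0 < F a" "F (b + h) < 1"
  shows "F a * F (b + h) \<le> F b * F (a + h)"
proof (cases "a = b \<or> h = 0")
  case True thus ?thesis by (auto simp: mult.commute)
next
  case False
  then have ab': "a < b" and h': "h > 0" using ab h by auto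
  define J where "J = {x. 0 < F x \<and> F x < 1}"
  have inJ: "a \<le> z \<Longrightarrow> z \<le> b + h \<Longrightarrow> z \<in> J" for z
    using Fmono[of a z] Fmono[of z "b+h"] J by (auto simp: J_def)
  define l where "l = h / (b + h - a)"
  have l: "0 < l" "l < 1" using ab' h' by (auto simp: l_def field_simps)
  have lh: "l * (b + h - a) = h" using ab' h' by (simp add: l_def)
  have e1: "b = (1 - (1 - l)) * a + (1 - l) * (b + h)" using lh
    by (simp add: algebra_simps)
  have e2: "a + h = (1 - l) * a + l * (b + h)" using lh
    by (simp add: algebra_simps)
  have cv: "concave_on J (\<lambda>x. ln (F x))" using lc by (simp add: J_def)
  have aJ: "a \<in> J" and bhJ: "b + h \<in> J" using inJ[of a] inJ[of "b+h"] ab' h' by auto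
  have "ln (F ((1 - (1 - l)) *\<^sub>R a + (1 - l) *\<^sub>R (b + h))) \<ge> (1 - (1 - l)) * ln (F a) + (1 - l) * ln (F (b + h))"
    by (rule concave_onD[OF cv]) (use l aJ bhJ in auto)
  then have i1: "ln (F b) \<ge> l * ln (F a) + (1 - l) * ln (F (b + h))"
    using e1 by simp
  have "ln (F ((1 - l) *\<^sub>R a + l *\<^sub>R (b + h))) \<ge> (1 - l) * ln (F a) + l * ln (F (b + h))"
    by (rule concave_onD[OF cv]) (use l aJ bhJ in auto)
  then have i2: "ln (F (a + h)) \<ge> (1 - l) * ln (F a) + l * ln (F (b + h))"
    using e2 by simp
  have pos: "0 < F b" "0 < F (a + h)" "0 < F (b+h)"
    using inJ[of b] inJ[of "a+h"] inJ[of "b+h"] ab' h' by (auto simp: J_def)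
  have "ln (F a * F (b + h)) \<le> ln (F b * F (a + h))"
    using i1 i2 pos J by (simp add: ln_mult algebra_simps)
  then have "ln (F a * F (b + h)) \<le> ln (F b * F (a + h))" .
  moreover have "0 < F a * F (b + h)" "0 < F b * F (a + h)" using pos J by auto
  ultimately show ?thesis by (subst (asm) ln_le_cancel_iff) auto
qed

lemma F_at_inf:
  assumes S: "\<exists>x. F x = 1" and lb: "\<And>x. F x = 1 \<Longrightarrow> b \<le> x"
  shows "F (Inf {x. F x = 1}) = 1"
proof -
  define w where "w = Inf {x. F x = 1}"
  have bdd: "bdd_below {x. F x = 1}" using lb by (auto simp: bdd_below_def)
  have ne: "{x. F x = 1} \<noteq> {}" using S by auto
  have "F w \<ge> 1 - e" if e: "e > 0" for e
  proof -
    have "((\<lambda>z. F z) \<longlongrightarrow> F w) (at_right w)"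
      using Fright[of w] by (simp add: continuous_within)
    then have "eventually (\<lambda>z. F z < F w + e) (at_right w)"
      using e by (intro order_tendstoD) auto
    then obtain d where d: "d > w" "\<And>z. w < z \<Longrightarrow> z < d \<Longrightarrow> F z < F w + e"
      by (auto simp: eventually_at_right_field)
    obtain x where x: "F x = 1" "x < d"
      using cInf_lessD[OF ne, of d] d(1) by (auto simp: w_def)
    have "w \<le> x" using x bdd by (auto simp: w_def intro: cInf_lower)
    show ?thesis
    proof (cases "w = x")
      case True thus ?thesis using x e by simp
    next
      case False thus ?thesis using d(2)[of x] x \<open>w \<le> x\<close> by auto
    qed
  qed
  then have "F w \<ge> 1"
    by (metis field_le_epsilon add.commute diff_le_eq)
  thus ?thesis using Fle1[of w] by (simp add: w_def)
qed

lemma four_point: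
  assumes ab: "a \<le> b" and h: "0 \<le> h" and Fa: "0 < F a"
  shows "F a * F (b + h) \<le> F b * F (a + h)"
proof (cases "F (b + h) < 1")
  case True thus ?thesis using four_point_J assms by blast
next
  case False
  then have Fbh: "F (b + h) = 1" using Fle1[of "b+h"] by linarith
  show ?thesis
  proof (cases "F b < 1")
    case False
    then have "F b = 1" using Fle1[of b] by linarith
    thus ?thesis using Fmono[of a "a+h"] h Fbh by simp
  next
    case Fb: True
    define w where "w = Inf {x. F x = 1}"
    have lbw: "F x = 1 \<Longrightarrow> b \<le> x" for x using Fb Fmono[of x b] by (cases "x \<le> b") auto
    have Fw: "F w = 1" unfolding w_def by (rule F_at_inf) (use Fbh lbw in auto)
    have bw: "b < w" using Fw lbw[of w] Fb by (cases "b = w") auto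
    have wbh: "w \<le> b + h" unfolding w_def using Fbh lbw by (intro cInf_lower) (auto simp: bdd_below_def)
    have below: "F z < 1" if "z < w" for z
    proof (rule ccontr)
      assume "\<not> F z < 1"
      then have "F z = 1" using Fle1[of z] by linarith
      then have "w \<le> z" unfolding w_def using lbw by (intro cInf_lower) (auto simp: bdd_below_def)
      thus False using that by simp
    qed
    have ab': "a < w" using ab bw by simp
    have cont: "isCont F w" using cont_pos[OF ab' Fa] .
    have lim: "(F \<longlongrightarrow> 1) (at_left w)"
      using cont Fw by (simp add: isCont_def filterlim_at_split)
    have ev: "eventually (\<lambda>z. F a * F z \<le> F b * F (a + h)) (at_left w)"
    proof -
      have "eventually (\<lambda>z. b < z \<and> z < w) (at_left w)"
        using bw by (auto simp: eventually_at_left_field intro: exI[of _ b])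
      then show ?thesis
      proof eventually_elim
        case (elim z)
        have "F a * F (b + (z - b)) \<le> F b * F (a + (z - b))"
          using elim below[of z] Fa ab by (intro four_point_J) auto
        also have "\<dots> \<le> F b * F (a + h)"
          using elim wbh Fnn[of b] by (intro mult_left_mono Fmono) auto
        finally show ?case by simp
      qed
    qed
    have "F a * 1 \<le> F b * F (a + h)"
      by (rule tendsto_le[OF _ tendsto_const tendsto_mult[OF tendsto_const lim] ev]) simp
    thus ?thesis using Fbh by simp
  qed
qed

end

context lcF begin

lemma exists_below: assumes "0 < e" shows "\<exists>b. F b < e"
proof -
  have "eventually (\<lambda>z. F z < e) at_bot" using Fbot assms by (rule order_tendstoD)
  then show ?thesis unfolding eventually_at_bot_linorder by auto
qed

lemma exists_above: assumes "e < 1" shows "\<exists>R\<ge>R0. e < F R"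
proof -
  have "eventually (\<lambda>z. e < F z) at_top" using Ftop assms by (rule order_tendstoD)
  then obtain N where "\<And>n. n \<ge> N \<Longrightarrow> e < F n" unfolding eventually_at_top_linorder by auto
  then show ?thesis by (intro exI[of _ "max N R0"]) auto
qed

lemma hit_level:
  assumes s1: "0 < F s1" and v: "F s1 \<le> v" "v < 1"
  shows "\<exists>h\<ge>0. F (s1 + h) = v"
proof (cases "F s1 = v")
  case True thus ?thesis by (intro exI[of _ 0]) auto
next
  case False
  then have lt: "F s1 < v" using v by simp
  have "((\<lambda>z. F z) \<longlongrightarrow> F s1) (at_right s1)"
    using Fright[of s1] by (simp add: continuous_within)
  then have "eventually (\<lambda>z. F z < v) (at_right s1)"
    using lt by (rule order_tendstoD)
  then obtain d where d: "d > s1" "\<And>z. s1 < z \<Longrightarrow> z < d \<Longrightarrow> F z < v"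
    unfolding eventually_at_right_field by blast
  define s1' where "s1' = (s1 + d) / 2"
  have s1': "s1 < s1'" "F s1' < v" using d by (auto simp: s1'_def)
  obtain R where R: "R \<ge> s1'" "v < F R" using exists_above[OF v(2)] by blast
  have "continuous_on {s1'..R} F"
  proof (intro continuous_at_imp_continuous_on ballI)
    fix z assume "z \<in> {s1'..R}"
    then have "s1 < z" using s1' by auto
    then show "isCont F z" using cont_pos s1 by blast
  qed
  then obtain z where z: "s1' \<le> z" "z \<le> R" "F z = v"
    using IVT'[of F s1' v R] s1' R by auto
  show ?thesis by (intro exI[of _ "z - s1"]) (use z s1' in auto)
qed

lemma level_shift:
  assumes c: "0 < c" "c \<le> 1" and xy: "0 < x" "x < y" "y < 1"
    and s1: "c * x \<le> F s1" "F s1 < c * y"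
  shows "emeasure lborel ({s. c * x \<le> F s \<and> F s < c * y} \<inter> {s1..})
          \<le> emeasure lborel {s. x \<le> F s \<and> F s < y}"
proof -
  define v where "v = F s1 / c"
  have Fs1: "0 < F s1" using s1 c xy by (smt (verit) mult_pos_pos)
  have vge: "F s1 \<le> v" using c Fs1 by (simp add: v_def field_simps mult_left_le)
  have vx: "x \<le> v" and vy: "v < y" using s1 c by (auto simp: v_def field_simps)
  obtain h where h: "h \<ge> 0" "F (s1 + h) = v" using hit_level[OF Fs1 vge] vy xy by auto
  have sub: "{s. c * x \<le> F s \<and> F s < c * y} \<inter> {s1..} \<subseteq> (\<lambda>z. h + z) -` {s. x \<le> F s \<and> F s < y} \<inter> space lborel"
  proof
    fix s assume s: "s \<in> {s. c * x \<le> F s \<and> F s < c * y} \<inter> {s1..}"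
    then have ss: "s1 \<le> s" "F s < c * y" by auto
    have "F s1 * F (s + h) \<le> F s * F (s1 + h)" using four_point[OF ss(1) h(1) Fs1] .
    also have "\<dots> = F s1 * (F s / c)" using h c by (simp add: v_def)
    finally have "F s1 * F (s + h) \<le> F s1 * (F s / c)" .
    then have "F (s + h) \<le> F s / c" using Fs1 by (rule mult_left_le_imp_le)
    also have "\<dots> < y" using ss c by (simp add: field_simps mult.commute)
    finally have up: "F (s + h) < y" .
    have "v \<le> F (s + h)" using h Fmono[of "s1 + h" "s + h"] ss by simp
    with up vx show "s \<in> (\<lambda>z. h + z) -` {s. x \<le> F s \<and> F s < y} \<inter> space lborel"
      by (simp add: add.commute)
  qed
  have meas: "{s. x \<le> F s \<and> F s < y} \<in> sets borel" by measurable
  have "emeasure lborel ({s. c * x \<le> F s \<and> F s < c * y} \<inter> {s1..})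
        \<le> emeasure lborel ((\<lambda>z. h + z) -` {s. x \<le> F s \<and> F s < y} \<inter> space lborel)"
    using sub meas by (intro emeasure_mono) auto
  also have "\<dots> = emeasure (distr lborel borel ((+) h)) {s. x \<le> F s \<and> F s < y}"
    using meas by (subst emeasure_distr) auto
  also have "\<dots> = emeasure lborel {s. x \<le> F s \<and> F s < y}"
    by (simp add: lborel_distr_plus)
  finally show ?thesis .
qed

lemma level_compare:
  assumes c: "0 < c" "c \<le> 1" and xy: "0 < x" "x < y" "y < 1"
  shows "emeasure lborel {s. c * x \<le> F s \<and> F s < c * y}
          \<le> emeasure lborel {s. x \<le> F s \<and> F s < y}"
proof (cases "{s. c * x \<le> F s \<and> F s < c * y} = {}")
  case True
  then show ?thesis by (metis emeasure_empty zero_le)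
next
  case ne: False
  define S1 where "S1 = {s. c * x \<le> F s \<and> F s < c * y}"
  define S2 where "S2 = {s. x \<le> F s \<and> F s < y}"
  have cx: "0 < c * x" using c xy by simp
  obtain b where b: "F b < c * x" using exists_below[OF cx] by blast
  have bl: "s \<in> S1 \<Longrightarrow> b \<le> s" for s using b Fmono[of s b] by (cases "s \<le> b") (auto simp: S1_def)
  have bdd: "bdd_below S1" using bl by (auto simp: bdd_below_def)
  have ne1: "S1 \<noteq> {}" using ne by (simp add: S1_def)
  have m1: "S1 \<in> sets borel" unfolding S1_def by measurable
  show ?thesis
    unfolding S1_def[symmetric] S2_def[symmetric]
  proof (rule ennreal_le_epsilon)
    fix e :: real assume e: "0 < e"
    define l where "l = Inf S1"
    obtain s1 where s1: "s1 \<in> S1" "s1 < l + e"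
      using cInf_lessD[OF ne1, of "l + e"] e by (auto simp: l_def)
    have ls1: "l \<le> s1" using s1 bdd by (auto simp: l_def intro: cInf_lower)
    have "S1 \<subseteq> {l..<s1} \<union> (S1 \<inter> {s1..})"
      using bdd by (auto simp: l_def intro: cInf_lower)
    then have "emeasure lborel S1 \<le> emeasure lborel ({l..<s1} \<union> (S1 \<inter> {s1..}))"
      using m1 by (intro emeasure_mono) auto
    also have "\<dots> \<le> emeasure lborel {l..<s1} + emeasure lborel (S1 \<inter> {s1..})"
      using m1 by (intro emeasure_subadditive) auto
    also have "emeasure lborel {l..<s1} \<le> ennreal e"
      using ls1 s1 by (simp add: ennreal_leI)
    also have "emeasure lborel (S1 \<inter> {s1..}) \<le> emeasure lborel S2"
      unfolding S1_def S2_def by (rule level_shift) (use c xy s1 in \<open>auto simp: S1_def\<close>)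
    finally show "emeasure lborel S1 \<le> emeasure lborel S2 + ennreal e"
      by (simp add: add.commute add_mono)
  qed
qed

end

definition kw :: "nat \<Rightarrow> real \<Rightarrow> real \<Rightarrow> real \<Rightarrow> ennreal" where
  "kw m x y v = ennreal (if 0 < x \<and> x \<le> v \<and> v < y \<and> y < 1 then real (Suc m) * x ^ m else 0)"

definition hh :: "nat \<Rightarrow> real \<Rightarrow> real" where
  "hh m v = (if v < 1 then v ^ Suc m * (1 - v) else 0)"

lemma kw_meas[measurable]:
  assumes [measurable]: "f \<in> borel_measurable M" "g \<in> borel_measurable M" "w \<in> borel_measurable M"
  shows "(\<lambda>z. kw m (f z) (g z) (w z)) \<in> borel_measurable M"
  unfolding kw_def by measurable

lemma hh_meas[measurable]:
  assumes [measurable]: "f \<in> borel_measurable M"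
  shows "(\<lambda>z. hh m (f z)) \<in> borel_measurable M"
  unfolding hh_def by measurable

lemma power_integral:
  assumes v: "0 \<le> v"
  shows "(\<integral>\<^sup>+x. ennreal (if 0 < x \<and> x \<le> v then real (Suc m) * x ^ m else 0) \<partial>lborel) = ennreal (v ^ Suc m)"
proof -
  have "(\<integral>\<^sup>+x. ennreal (if 0 < x \<and> x \<le> v then real (Suc m) * x ^ m else 0) \<partial>lborel)
      = (\<integral>\<^sup>+x. ennreal (real (Suc m) * x ^ m) * indicator {0..v} x \<partial>lborel)"
  proof (rule nn_integral_cong_AE)
    show "AE x in lborel. ennreal (if 0 < x \<and> x \<le> v then real (Suc m) * x ^ m else 0)
        = ennreal (real (Suc m) * x ^ m) * indicator {0..v} x"
      using AE_lborel_singleton[of 0] by eventually_elim (auto simp: indicator_def)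
  qed
  also have "\<dots> = ennreal (v ^ Suc m - 0 ^ Suc m)"
  proof (rule nn_integral_has_integral_lebesgue')
    show "((\<lambda>x. real (Suc m) * x ^ m) has_integral v ^ Suc m - 0 ^ Suc m) {0..v}"
    proof -
    have "((\<lambda>x. real (Suc m) * x ^ m) has_integral ((\<lambda>x. x ^ Suc m) v - (\<lambda>x. x ^ Suc m) 0)) {0..v}"
    proof (rule fundamental_theorem_of_calculus)
      show "0 \<le> v" using v .
      fix x :: real
      have "((\<lambda>x. x ^ Suc m) has_real_derivative real (Suc m) * x ^ m) (at x)"
        using DERIV_pow[of "Suc m" x] by simp
      then show "((\<lambda>x. x ^ Suc m) has_vector_derivative real (Suc m) * x ^ m) (at x within {0..v})"
        by (simp add: has_real_derivative_iff_has_vector_derivative[symmetric] has_field_derivative_at_within)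
    qed
    then show ?thesis by simp
    qed
  qed auto
  finally show ?thesis by simp
qed

lemma K_eq:
  assumes v: "0 \<le> v"
  shows "(\<integral>\<^sup>+x. \<integral>\<^sup>+y. kw m x y v \<partial>lborel \<partial>lborel) = ennreal (hh m v)"
proof -
  have "(\<integral>\<^sup>+x. \<integral>\<^sup>+y. kw m x y v \<partial>lborel \<partial>lborel)
     = (\<integral>\<^sup>+x. ennreal (if 0 < x \<and> x \<le> v then real (Suc m) * x ^ m else 0) * emeasure lborel {v<..<1} \<partial>lborel)"
  proof (rule nn_integral_cong)
    fix x
    have "(\<integral>\<^sup>+y. kw m x y v \<partial>lborel)
        = (\<integral>\<^sup>+y. ennreal (if 0 < x \<and> x \<le> v then real (Suc m) * x ^ m else 0) * indicator {v<..<1} y \<partial>lborel)"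
      by (intro nn_integral_cong) (auto simp: kw_def indicator_def)
    also have "\<dots> = ennreal (if 0 < x \<and> x \<le> v then real (Suc m) * x ^ m else 0) * emeasure lborel {v<..<1}"
      by (rule nn_integral_cmult_indicator) simp
    finally show "(\<integral>\<^sup>+y. kw m x y v \<partial>lborel) = ennreal (if 0 < x \<and> x \<le> v then real (Suc m) * x ^ m else 0) * emeasure lborel {v<..<1}" .
  qed
  also have "\<dots> = ennreal (v ^ Suc m) * emeasure lborel {v<..<1}"
    by (subst nn_integral_multc) (auto simp: power_integral[OF v])
  also have "\<dots> = ennreal (hh m v)"
  proof (cases "v < 1")
    case True
    then show ?thesis using v by (simp add: hh_def ennreal_mult[symmetric])
  next
    case False
    then have "{v<..<1} = ({} :: real set)" by auto
    then show ?thesis using False by (simp add: hh_def)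
  qed
  finally show ?thesis .
qed

context lcF begin

lemma G_swap:
  assumes c: "0 < c"
  shows "(\<integral>\<^sup>+s. ennreal (hh m (F s / c)) \<partial>lborel)
       = (\<integral>\<^sup>+x. \<integral>\<^sup>+y. (if 0 < x \<and> y < 1 then ennreal (real (Suc m) * x ^ m) else 0)
              * emeasure lborel {s. x \<le> F s / c \<and> F s / c < y} \<partial>lborel \<partial>lborel)"
proof -
  have "(\<integral>\<^sup>+s. ennreal (hh m (F s / c)) \<partial>lborel)
      = (\<integral>\<^sup>+s. \<integral>\<^sup>+x. \<integral>\<^sup>+y. kw m x y (F s / c) \<partial>lborel \<partial>lborel \<partial>lborel)"
    using c Fnn by (intro nn_integral_cong) (simp add: K_eq)
  also have "\<dots> = (\<integral>\<^sup>+x. \<integral>\<^sup>+s. \<integral>\<^sup>+y. kw m x y (F s / c) \<partial>lborel \<partial>lborel \<partial>lborel)"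
    by (rule lborel_pair.Fubini'[symmetric]) measurable
  also have "\<dots> = (\<integral>\<^sup>+x. \<integral>\<^sup>+y. \<integral>\<^sup>+s. kw m x y (F s / c) \<partial>lborel \<partial>lborel \<partial>lborel)"
    by (intro nn_integral_cong lborel_pair.Fubini'[symmetric]) measurable
  also have "\<dots> = (\<integral>\<^sup>+x. \<integral>\<^sup>+y. (if 0 < x \<and> y < 1 then ennreal (real (Suc m) * x ^ m) else 0)
              * emeasure lborel {s. x \<le> F s / c \<and> F s / c < y} \<partial>lborel \<partial>lborel)"
  proof (intro nn_integral_cong)
    fix x y
    have "(\<integral>\<^sup>+s. kw m x y (F s / c) \<partial>lborel)
        = (\<integral>\<^sup>+s. (if 0 < x \<and> y < 1 then ennreal (real (Suc m) * x ^ m) else 0)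
              * indicator {s. x \<le> F s / c \<and> F s / c < y} s \<partial>lborel)"
      by (intro nn_integral_cong) (auto simp: kw_def indicator_def)
    also have "\<dots> = (if 0 < x \<and> y < 1 then ennreal (real (Suc m) * x ^ m) else 0)
              * emeasure lborel {s. x \<le> F s / c \<and> F s / c < y}"
      by (rule nn_integral_cmult_indicator) measurable
    finally show "(\<integral>\<^sup>+s. kw m x y (F s / c) \<partial>lborel) = (if 0 < x \<and> y < 1 then ennreal (real (Suc m) * x ^ m) else 0)
              * emeasure lborel {s. x \<le> F s / c \<and> F s / c < y}" .
  qed
  finally show ?thesis .
qed

lemma G_mono:
  assumes c: "0 < c" "c \<le> 1"
  shows "(\<integral>\<^sup>+s. ennreal (hh m (F s / c)) \<partial>lborel) \<le> (\<integral>\<^sup>+s. ennreal (hh m (F s)) \<partial>lborel)"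
proof -
  have "(\<integral>\<^sup>+s. ennreal (hh m (F s / c)) \<partial>lborel)
     \<le> (\<integral>\<^sup>+x. \<integral>\<^sup>+y. (if 0 < x \<and> y < 1 then ennreal (real (Suc m) * x ^ m) else 0)
              * emeasure lborel {s. x \<le> F s / 1 \<and> F s / 1 < y} \<partial>lborel \<partial>lborel)"
    unfolding G_swap[OF c(1)]
  proof (intro nn_integral_mono)
    fix x y :: real
    show "(if 0 < x \<and> y < 1 then ennreal (real (Suc m) * x ^ m) else 0) * emeasure lborel {s. x \<le> F s / c \<and> F s / c < y}
      \<le> (if 0 < x \<and> y < 1 then ennreal (real (Suc m) * x ^ m) else 0) * emeasure lborel {s. x \<le> F s / 1 \<and> F s / 1 < y}"
    proof (cases "0 < x \<and> y < 1 \<and> x < y")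
      case True
      have "{s. x \<le> F s / c \<and> F s / c < y} = {s. c * x \<le> F s \<and> F s < c * y}"
        using c by (intro Collect_cong) (simp add: pos_le_divide_eq pos_divide_less_eq mult.commute[of x c] mult.commute[of y c])
      then have "emeasure lborel {s. x \<le> F s / c \<and> F s / c < y} \<le> emeasure lborel {s. x \<le> F s / 1 \<and> F s / 1 < y}"
        using level_compare[OF c, of x y] True by simp
      then show ?thesis by (intro mult_left_mono) auto
    next
      case False
      show ?thesis
      proof (cases "0 < x \<and> y < 1")
        case True
        then have "\<not> x < y" using False by simp
        then have e: "{s. x \<le> F s / c \<and> F s / c < y} = {}" by auto
        show ?thesis unfolding e emeasure_empty by simp
      next
        case False
        show ?thesis unfolding if_not_P[OF False] by simp
      qed
    qed
  qed
  also have "\<dots> = (\<integral>\<^sup>+s. ennreal (hh m (F s / 1)) \<partial>lborel)"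
    by (rule G_swap[symmetric]) simp
  finally show ?thesis by simp
qed

lemma key_ineq:
  "(\<integral>\<^sup>+s. ennreal (F s ^ Suc m * (if s < t then F t - F s else 0)) \<partial>lborel)
    \<le> ennreal (F t ^ Suc (Suc m)) * (\<integral>\<^sup>+s. ennreal (F s ^ Suc m * (1 - F s)) \<partial>lborel)"
proof (cases "F t = 0")
  case True
  have z: "F s ^ Suc m * (if s < t then F t - F s else 0) = 0" for s
    using True Fmono[of s t] Fnn[of s] by auto
  have eq: "(\<lambda>s. ennreal (F s ^ Suc m * (if s < t then F t - F s else 0))) = (\<lambda>s. 0)"
    by (intro ext) (simp only: z ennreal_0)
  show ?thesis unfolding eq by simp
next
  case False
  define c where "c = F t"
  have c: "0 < c" "c \<le> 1" using False Fnn[of t] Fle1[of t] by (auto simp: c_def)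
  have eq1: "F s ^ Suc m * (if s < t then F t - F s else 0) = c ^ Suc (Suc m) * hh m (F s / c)" for s
  proof (cases "s < t")
    case True
    then have "F s \<le> c" using Fmono[of s t] by (simp add: c_def)
    show ?thesis
    proof (cases "F s < c")
      case True
      then show ?thesis using c \<open>s < t\<close> by (simp add: hh_def c_def field_simps power_divide)
    next
      case False
      then show ?thesis using \<open>F s \<le> c\<close> c \<open>s < t\<close> by (simp add: hh_def c_def)
    qed
  next
    case False
    then have "c \<le> F s" using Fmono[of t s] by (simp add: c_def)
    then show ?thesis using False c by (simp add: hh_def field_simps)
  qed
  have eq2: "F s ^ Suc m * (1 - F s) = hh m (F s)" for s
    using Fle1[of s] by (cases "F s < 1") (auto simp: hh_def)
  have "(\<integral>\<^sup>+s. ennreal (F s ^ Suc m * (if s < t then F t - F s else 0)) \<partial>lborel)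
      = (\<integral>\<^sup>+s. ennreal (c ^ Suc (Suc m)) * ennreal (hh m (F s / c)) \<partial>lborel)"
  proof (rule nn_integral_cong)
    fix s
    have hnn: "0 \<le> hh m (F s / c)" using Fnn[of s] c by (auto simp: hh_def)
    show "ennreal (F s ^ Suc m * (if s < t then F t - F s else 0)) = ennreal (c ^ Suc (Suc m)) * ennreal (hh m (F s / c))"
      unfolding eq1 by (rule ennreal_mult) (use hnn c in auto)
  qed
  also have "\<dots> = ennreal (c ^ Suc (Suc m)) * (\<integral>\<^sup>+s. ennreal (hh m (F s / c)) \<partial>lborel)"
    by (rule nn_integral_cmult) measurable
  also have "\<dots> \<le> ennreal (c ^ Suc (Suc m)) * (\<integral>\<^sup>+s. ennreal (hh m (F s)) \<partial>lborel)"
    by (intro mult_left_mono G_mono c) simp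
  finally show ?thesis by (simp only: eq2 c_def)
qed

end

locale iidX = prob_space M for M :: "'a measure" +
  fixes mu :: "real measure" and X :: "nat \<Rightarrow> 'a \<Rightarrow> real"
  assumes rdist: "real_distribution mu"
    and indepX: "indep_vars (\<lambda>_. borel) X {1..}"
    and distrX: "\<And>i. i \<ge> 1 \<Longrightarrow> distr M borel (X i) = mu"
begin

interpretation mu: real_distribution mu by (rule rdist)

lemma Xmeas: "1 \<le> i \<Longrightarrow> X i \<in> borel_measurable M"
  using indepX by (auto simp: indep_vars_def)

lemma XmeasS[measurable]: "X (Suc i) \<in> borel_measurable M"
  by (rule Xmeas) simp

lemma pmax_meas[measurable]: "pmax X k \<in> borel_measurable M"
  unfolding pmax_def by (rule borel_measurable_Max) (auto intro: Xmeas)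

lemma pspacing_meas[measurable]: "pspacing X k \<in> borel_measurable M"
  unfolding pspacing_def by measurable

lemma pmax_le: "1 \<le> k \<Longrightarrow> pmax X k w \<le> s \<longleftrightarrow> (\<forall>j\<in>{1..k}. X j w \<le> s)"
  unfolding pmax_def by (subst Max_le_iff) auto

lemma pmax_ge: "j \<in> {1..k} \<Longrightarrow> X j w \<le> pmax X k w"
  unfolding pmax_def by (rule Max_ge) auto

lemma pmax_Suc: "1 \<le> k \<Longrightarrow> pmax X (Suc k) w = max (pmax X k w) (X (Suc k) w)"
proof -
  assume k: "1 \<le> k"
  have "{1..Suc k} = insert (Suc k) {1..k}" by auto
  then have "pmax X (Suc k) w = Max (insert (X (Suc k) w) ((\<lambda>j. X j w) ` {1..k}))"
    unfolding pmax_def by simp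
  also have "\<dots> = max (X (Suc k) w) (Max ((\<lambda>j. X j w) ` {1..k}))"
    using k by (subst Max_insert) auto
  finally show ?thesis by (simp add: pmax_def max.commute)
qed

lemma psp: "1 \<le> k \<Longrightarrow> pspacing X k w = max 0 (X (Suc k) w - pmax X k w)"
  unfolding pspacing_def pmax_Suc by (simp add: max_def)

lemma psp_nn: "1 \<le> k \<Longrightarrow> 0 \<le> pspacing X k w"
  using psp by simp

definition Ind :: "nat \<Rightarrow> 'a \<Rightarrow> real \<Rightarrow> ennreal" where
  "Ind k w s = (if pmax X k w \<le> s \<and> s < X (Suc k) w then 1 else 0)"

lemma Ind_meas[measurable]:
  "(\<lambda>x. Ind k (f x) (g x)) \<in> borel_measurable N"
  if [measurable]: "f \<in> measurable N M" "g \<in> borel_measurable N"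
  unfolding Ind_def by measurable

lemma Z_repr:
  assumes k: "1 \<le> k"
  shows "ennreal (pspacing X k w) = (\<integral>\<^sup>+s. Ind k w s \<partial>lborel)"
proof -
  have "(\<integral>\<^sup>+s. Ind k w s \<partial>lborel) = (\<integral>\<^sup>+s. indicator {pmax X k w..<X (Suc k) w} s \<partial>lborel)"
    by (intro nn_integral_cong) (auto simp: Ind_def indicator_def)
  also have "\<dots> = emeasure lborel {pmax X k w..<X (Suc k) w}" by simp
  also have "\<dots> = ennreal (pspacing X k w)"
  proof (cases "pmax X k w \<le> X (Suc k) w")
    case True thus ?thesis using psp[OF k, of w] by simp
  next
    case False
    then have "{pmax X k w..<X (Suc k) w} = {}" by auto
    then show ?thesis using psp[OF k, of w] False by simp
  qed
  finally show ?thesis ..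
qed

lemma prob_inter:
  assumes I: "finite I" "I \<noteq> {}" "I \<subseteq> {1..}" and A: "\<And>k. k \<in> I \<Longrightarrow> A k \<in> sets borel"
  shows "emeasure M (\<Inter>k\<in>I. X k -` A k \<inter> space M) = ennreal (\<Prod>k\<in>I. measure mu (A k))"
proof -
  have "emeasure M (\<Inter>k\<in>I. X k -` A k \<inter> space M) = ennreal (prob (\<Inter>k\<in>I. X k -` A k \<inter> space M))"
    by (rule emeasure_eq_measure)
  also have "prob (\<Inter>k\<in>I. X k -` A k \<inter> space M) = (\<Prod>k\<in>I. prob (X k -` A k \<inter> space M))"
    using A I by (intro indep_varsD[OF indepX]) auto
  also have "\<dots> = (\<Prod>k\<in>I. measure mu (A k))"
  proof (rule prod.cong)
    fix k assume "k \<in> I"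
    then have k: "1 \<le> k" "A k \<in> sets borel" using I A by auto
    have "measure mu (A k) = measure (distr M borel (X k)) (A k)" using distrX[OF k(1)] by simp
    also have "\<dots> = prob (X k -` A k \<inter> space M)" using k Xmeas[OF k(1)] by (simp add: measure_distr)
    finally show "prob (X k -` A k \<inter> space M) = measure mu (A k)" ..
  qed simp
  finally show ?thesis .
qed

lemma int_event:
  assumes I: "finite I" "I \<noteq> {}" "I \<subseteq> {1..}" and A: "\<And>k. k \<in> I \<Longrightarrow> A k \<in> sets borel"
    and P: "\<And>w. w \<in> space M \<Longrightarrow> P w \<longleftrightarrow> (\<forall>k\<in>I. X k w \<in> A k)"
  shows "(\<integral>\<^sup>+w. (if P w then 1 else 0) \<partial>M) = ennreal (\<Prod>k\<in>I. measure mu (A k))"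
proof -
  have ev: "(\<Inter>k\<in>I. X k -` A k \<inter> space M) \<in> sets M"
    using I A Xmeas by (intro sets.finite_INT) auto
  have "(\<integral>\<^sup>+w. (if P w then 1 else 0) \<partial>M) = (\<integral>\<^sup>+w. indicator (\<Inter>k\<in>I. X k -` A k \<inter> space M) w \<partial>M)"
    using P I by (intro nn_integral_cong) (auto simp: indicator_def)
  also have "\<dots> = emeasure M (\<Inter>k\<in>I. X k -` A k \<inter> space M)" using ev by simp
  also have "\<dots> = ennreal (\<Prod>k\<in>I. measure mu (A k))" by (rule prob_inter[OF I A])
  finally show ?thesis .
qed

interpretation pML: pair_sigma_finite M lborel ..

lemma E_single:
  assumes k: "1 \<le> k"
  shows "(\<integral>\<^sup>+w. ennreal (pspacing X k w) \<partial>M)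
    = (\<integral>\<^sup>+s. ennreal (\<Prod>l\<in>{1..Suc k}. measure mu (if l \<le> k then {..s} else {s<..})) \<partial>lborel)"
proof -
  have "(\<integral>\<^sup>+w. ennreal (pspacing X k w) \<partial>M) = (\<integral>\<^sup>+w. \<integral>\<^sup>+s. Ind k w s \<partial>lborel \<partial>M)"
    using k by (intro nn_integral_cong) (simp add: Z_repr)
  also have "\<dots> = (\<integral>\<^sup>+s. \<integral>\<^sup>+w. Ind k w s \<partial>M \<partial>lborel)"
    by (rule pML.Fubini'[symmetric]) measurable
  also have "\<dots> = (\<integral>\<^sup>+s. ennreal (\<Prod>l\<in>{1..Suc k}. measure mu (if l \<le> k then {..s} else {s<..})) \<partial>lborel)"
  proof (rule nn_integral_cong)
    fix s
    show "(\<integral>\<^sup>+w. Ind k w s \<partial>M) = ennreal (\<Prod>l\<in>{1..Suc k}. measure mu (if l \<le> k then {..s} else {s<..}))"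
      unfolding Ind_def
    proof (rule int_event)
      fix w
      show "(pmax X k w \<le> s \<and> s < X (Suc k) w) \<longleftrightarrow> (\<forall>l\<in>{1..Suc k}. X l w \<in> (if l \<le> k then {..s} else {s<..}))"
      proof
        assume "pmax X k w \<le> s \<and> s < X (Suc k) w"
        then show "\<forall>l\<in>{1..Suc k}. X l w \<in> (if l \<le> k then {..s} else {s<..})"
          using pmax_le[OF k] by (auto simp: le_Suc_eq)
      next
        assume a: "\<forall>l\<in>{1..Suc k}. X l w \<in> (if l \<le> k then {..s} else {s<..})"
        then have "s < X (Suc k) w" by (auto elim!: ballE[of _ _ "Suc k"])
        moreover have "X j w \<le> s" if j: "j \<in> {1..k}" for j
        proof -
          have "X j w \<in> (if j \<le> k then {..s} else {s<..})" by (rule bspec[OF a]) (use j in auto)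
          thus ?thesis using j by simp
        qed
        then have "pmax X k w \<le> s" using pmax_le[OF k] by blast
        ultimately show "pmax X k w \<le> s \<and> s < X (Suc k) w" by simp
      qed
    qed auto
  qed
  finally show ?thesis .
qed

end

definition AA :: "nat \<Rightarrow> nat \<Rightarrow> real \<Rightarrow> real \<Rightarrow> nat \<Rightarrow> real set" where
  "AA i j s t k = (if k \<le> i then {..s} else if k = Suc i then {s<..t} else if k \<le> j then {..t} else {t<..})"

lemma prod_split4:
  fixes g :: "nat \<Rightarrow> real"
  assumes "1 \<le> i" "i < j"
  shows "(\<Prod>k\<in>{1..Suc j}. g k) = (\<Prod>k\<in>{1..i}. g k) * g (Suc i) * (\<Prod>k\<in>{Suc (Suc i)..j}. g k) * g (Suc j)"
proof -
  have "(\<Prod>k\<in>{1..Suc j}. g k) = g (Suc j) * (\<Prod>k\<in>{1..j}. g k)"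
    using assms by (subst prod.nat_ivl_Suc') auto
  also have "{1..j} = {1..i + (j - i)}" using assms by simp
  also have "(\<Prod>k\<in>{1..i + (j - i)}. g k) = (\<Prod>k\<in>{1..i}. g k) * (\<Prod>k\<in>{i + 1..i + (j - i)}. g k)"
    using assms by (intro prod.ub_add_nat) auto
  also have "{i + 1..i + (j - i)} = {Suc i..j}" using assms by simp
  also have "(\<Prod>k\<in>{Suc i..j}. g k) = g (Suc i) * (\<Prod>k\<in>{Suc (Suc i)..j}. g k)"
    using assms by (intro prod.atLeast_Suc_atMost) auto
  finally show ?thesis by (simp add: ac_simps)
qed

context iidX begin

interpretation mu: real_distribution mu by (rule rdist)

lemma meas_le: "measure mu {..s} = cdf mu s" by (simp add: cdf_def)
lemma meas_gt: "measure mu {t<..} = 1 - cdf mu t"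
proof -
  have "measure mu (space mu - {..t}) = 1 - measure mu {..t}" by (rule mu.prob_compl) simp
  moreover have "space mu - {..t} = {t<..}" by auto
  ultimately show ?thesis by (simp add: cdf_def)
qed
lemma meas_Ioc: "measure mu {s<..t} = (if s < t then cdf mu t - cdf mu s else 0)"
  by (auto simp: mu.cdf_diff_eq)

lemma prod_single: "(\<Prod>l\<in>{1..Suc k}. measure mu (if l \<le> k then {..s} else {s<..})) = cdf mu s ^ k * (1 - cdf mu s)"
proof -
  have "(\<Prod>l\<in>{1..Suc k}. measure mu (if l \<le> k then {..s} else {s<..}))
     = measure mu {s<..} * (\<Prod>l\<in>{1..k}. measure mu (if l \<le> k then {..s} else {s<..}))"
    by (subst prod.nat_ivl_Suc') auto
  also have "(\<Prod>l\<in>{1..k}. measure mu (if l \<le> k then {..s} else {s<..})) = (\<Prod>l\<in>{1..k}. cdf mu s)"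
    by (intro prod.cong) (auto simp: meas_le)
  finally show ?thesis by (simp add: meas_gt mult.commute)
qed

lemma prod_pair:
  assumes "1 \<le> i" "i < j"
  shows "(\<Prod>k\<in>{1..Suc j}. measure mu (AA i j s t k))
     = cdf mu s ^ i * (if s < t then cdf mu t - cdf mu s else 0) * (cdf mu t ^ (j - Suc i) * (1 - cdf mu t))"
proof -
  have "(\<Prod>k\<in>{1..Suc j}. measure mu (AA i j s t k))
    = (\<Prod>k\<in>{1..i}. measure mu (AA i j s t k)) * measure mu (AA i j s t (Suc i))
      * (\<Prod>k\<in>{Suc (Suc i)..j}. measure mu (AA i j s t k)) * measure mu (AA i j s t (Suc j))"
    by (rule prod_split4[OF assms])
  also have "(\<Prod>k\<in>{1..i}. measure mu (AA i j s t k)) = (\<Prod>k\<in>{1..i}. cdf mu s)"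
    by (intro prod.cong) (auto simp: AA_def meas_le)
  also have "(\<Prod>k\<in>{Suc (Suc i)..j}. measure mu (AA i j s t k)) = (\<Prod>k\<in>{Suc (Suc i)..j}. cdf mu t)"
    by (intro prod.cong) (auto simp: AA_def meas_le)
  also have "measure mu (AA i j s t (Suc i)) = (if s < t then cdf mu t - cdf mu s else 0)"
    by (simp add: AA_def meas_Ioc)
  also have "measure mu (AA i j s t (Suc j)) = 1 - cdf mu t"
    using assms by (simp add: AA_def meas_gt)
  finally show ?thesis by simp
qed

interpretation pML: pair_sigma_finite M lborel ..

lemma Ind_meas_s[measurable]:
  "(\<lambda>x. Ind k w (g x)) \<in> borel_measurable N" if [measurable]: "g \<in> borel_measurable N"
  unfolding Ind_def by measurable

lemma event_pair:
  assumes ij: "1 \<le> i" "i < j"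
  shows "(pmax X i w \<le> s \<and> s < X (Suc i) w \<and> pmax X j w \<le> t \<and> t < X (Suc j) w)
     \<longleftrightarrow> (\<forall>k\<in>{1..Suc j}. X k w \<in> AA i j s t k)" (is "?L \<longleftrightarrow> ?R")
proof
  assume L: ?L
  have j1: "1 \<le> j" using ij by simp
  show ?R
  proof
    fix k assume k: "k \<in> {1..Suc j}"
    show "X k w \<in> AA i j s t k"
    proof (cases "k \<le> i")
      case True
      then have "X k w \<le> pmax X i w" using k by (intro pmax_ge) auto
      then show ?thesis using L True by (simp add: AA_def)
    next
      case ki: False
      show ?thesis
      proof (cases "k \<le> j")
        case True
        then have "X k w \<le> pmax X j w" using k by (intro pmax_ge) auto
        then show ?thesis using L True ki by (auto simp: AA_def)
      next
        case False
        then have "k = Suc j" using k by simp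
        then show ?thesis using L ij by (auto simp: AA_def)
      qed
    qed
  qed
next
  assume R: ?R
  have Xk: "X k w \<in> AA i j s t k" if "k \<in> {1..Suc j}" for k by (rule bspec[OF R that])
  have a1: "s < X (Suc i) w" "X (Suc i) w \<le> t" using Xk[of "Suc i"] ij by (auto simp: AA_def)
  have a2: "t < X (Suc j) w" using Xk[of "Suc j"] ij by (auto simp: AA_def)
  have a3: "X k w \<le> s" if "k \<in> {1..i}" for k using Xk[of k] that ij by (auto simp: AA_def)
  have a4: "X k w \<le> t" if "k \<in> {1..j}" for k
  proof (cases "k \<le> i")
    case True thus ?thesis using a3[of k] a1 that by force
  next
    case False
    then show ?thesis using Xk[of k] that a1 by (auto simp: AA_def split: if_splits)
  qed
  have "pmax X i w \<le> s" using a3 pmax_le[OF ij(1)] by blast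
  moreover have "pmax X j w \<le> t" using a4 pmax_le[of j] ij by auto
  ultimately show ?L using a1 a2 by simp
qed

lemma E_pair:
  assumes ij: "1 \<le> i" "i < j"
  shows "(\<integral>\<^sup>+w. ennreal (pspacing X i w) * ennreal (pspacing X j w) \<partial>M)
    = (\<integral>\<^sup>+s. \<integral>\<^sup>+t. ennreal (\<Prod>k\<in>{1..Suc j}. measure mu (AA i j s t k)) \<partial>lborel \<partial>lborel)"
proof -
  have j1: "1 \<le> j" using ij by simp
  have "(\<integral>\<^sup>+w. ennreal (pspacing X i w) * ennreal (pspacing X j w) \<partial>M)
      = (\<integral>\<^sup>+w. \<integral>\<^sup>+s. \<integral>\<^sup>+t. Ind i w s * Ind j w t \<partial>lborel \<partial>lborel \<partial>M)"
  proof (rule nn_integral_cong)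
    fix w
    have "ennreal (pspacing X i w) * ennreal (pspacing X j w) = (\<integral>\<^sup>+s. Ind i w s \<partial>lborel) * (\<integral>\<^sup>+t. Ind j w t \<partial>lborel)"
      using ij j1 by (simp add: Z_repr)
    also have "\<dots> = (\<integral>\<^sup>+s. Ind i w s * (\<integral>\<^sup>+t. Ind j w t \<partial>lborel) \<partial>lborel)"
      by (rule nn_integral_multc[symmetric]) measurable
    also have "\<dots> = (\<integral>\<^sup>+s. \<integral>\<^sup>+t. Ind i w s * Ind j w t \<partial>lborel \<partial>lborel)"
      by (intro nn_integral_cong nn_integral_cmult[symmetric]) measurable
    finally show "ennreal (pspacing X i w) * ennreal (pspacing X j w) = (\<integral>\<^sup>+s. \<integral>\<^sup>+t. Ind i w s * Ind j w t \<partial>lborel \<partial>lborel)" .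
  qed
  also have "\<dots> = (\<integral>\<^sup>+s. \<integral>\<^sup>+w. \<integral>\<^sup>+t. Ind i w s * Ind j w t \<partial>lborel \<partial>M \<partial>lborel)"
    by (rule pML.Fubini'[symmetric]) measurable
  also have "\<dots> = (\<integral>\<^sup>+s. \<integral>\<^sup>+t. \<integral>\<^sup>+w. Ind i w s * Ind j w t \<partial>M \<partial>lborel \<partial>lborel)"
    by (intro nn_integral_cong pML.Fubini'[symmetric]) measurable
  also have "\<dots> = (\<integral>\<^sup>+s. \<integral>\<^sup>+t. ennreal (\<Prod>k\<in>{1..Suc j}. measure mu (AA i j s t k)) \<partial>lborel \<partial>lborel)"
  proof (intro nn_integral_cong)
    fix s t
    have "(\<integral>\<^sup>+w. Ind i w s * Ind j w t \<partial>M)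
       = (\<integral>\<^sup>+w. (if pmax X i w \<le> s \<and> s < X (Suc i) w \<and> pmax X j w \<le> t \<and> t < X (Suc j) w then 1 else 0) \<partial>M)"
      by (intro nn_integral_cong) (auto simp: Ind_def)
    also have "\<dots> = ennreal (\<Prod>k\<in>{1..Suc j}. measure mu (AA i j s t k))"
      by (rule int_event) (use event_pair[OF ij] in \<open>auto simp: AA_def\<close>)
    finally show "(\<integral>\<^sup>+w. Ind i w s * Ind j w t \<partial>M) = ennreal (\<Prod>k\<in>{1..Suc j}. measure mu (AA i j s t k))" .
  qed
  finally show ?thesis .
qed

end

locale both = lcF mu F + iidX M mu X
  for mu :: "real measure" and F :: "real \<Rightarrow> real" and M :: "'a measure" and X :: "nat \<Rightarrow> 'a \<Rightarrow> real"
begin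

lemma Fc: "cdf mu = F" using F_def by simp

lemma Xint:
  assumes k: "1 \<le> k" and int1: "integrable mu (\<lambda>x. x)"
  shows "integrable M (X k)"
proof -
  have "integrable (distr M borel (X k)) (\<lambda>x. x)" using distrX[OF k] int1 by simp
  then show ?thesis using Xmeas[OF k] by (subst (asm) integrable_distr_eq) auto
qed

lemma Zint:
  assumes k: "1 \<le> k" and int1: "integrable mu (\<lambda>x. x)"
  shows "integrable M (pspacing X k)"
proof (rule Bochner_Integration.integrable_bound[where f="\<lambda>w. \<bar>X (Suc k) w\<bar> + \<bar>X 1 w\<bar>"])
  show "integrable M (\<lambda>w. \<bar>X (Suc k) w\<bar> + \<bar>X 1 w\<bar>)"
  proof -
    have a: "integrable M (X (Suc k))" "integrable M (X 1)" by (rule Xint[OF _ int1]; simp)+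
    show ?thesis by (intro Bochner_Integration.integrable_add Bochner_Integration.integrable_abs a)
  qed
  show "AE w in M. norm (pspacing X k w) \<le> norm (\<bar>X (Suc k) w\<bar> + \<bar>X 1 w\<bar>)"
  proof (intro AE_I2)
    fix w
    have "X 1 w \<le> pmax X k w" using k by (intro pmax_ge) auto
    note x1 = this
    have nn: "0 \<le> pspacing X k w" by (rule psp_nn[OF k])
    have "pspacing X k w \<le> \<bar>X (Suc k) w\<bar> + \<bar>X 1 w\<bar>"
      using psp[OF k, of w] x1 abs_ge_self[of "X (Suc k) w"] abs_ge_minus_self[of "X 1 w"] abs_ge_zero[of "X 1 w"] abs_ge_zero[of "X (Suc k) w"]
      by (simp add: max_def)
    then show "norm (pspacing X k w) \<le> norm (\<bar>X (Suc k) w\<bar> + \<bar>X 1 w\<bar>)"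
      using nn by simp
  qed
qed measurable

lemma E_single_F:
  assumes k: "1 \<le> k"
  shows "(\<integral>\<^sup>+w. ennreal (pspacing X k w) \<partial>M) = (\<integral>\<^sup>+s. ennreal (F s ^ k * (1 - F s)) \<partial>lborel)"
  using E_single[OF k, unfolded prod_single Fc] .

lemma E_prod_le:
  assumes ij: "1 \<le> i" "i < j"
  shows "(\<integral>\<^sup>+w. ennreal (pspacing X i w) * ennreal (pspacing X j w) \<partial>M)
     \<le> (\<integral>\<^sup>+w. ennreal (pspacing X i w) \<partial>M) * (\<integral>\<^sup>+w. ennreal (pspacing X j w) \<partial>M)"
proof -
  obtain m where m: "i = Suc m" using ij by (cases i) auto
  define Ei where "Ei = (\<integral>\<^sup>+s. ennreal (F s ^ i * (1 - F s)) \<partial>lborel)"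
  have Fs: "0 \<le> F s" "F s \<le> 1" for s using Fnn Fle1 by auto
  have "(\<integral>\<^sup>+w. ennreal (pspacing X i w) * ennreal (pspacing X j w) \<partial>M)
     = (\<integral>\<^sup>+s. \<integral>\<^sup>+t. ennreal (F s ^ i * (if s < t then F t - F s else 0) * (F t ^ (j - Suc i) * (1 - F t))) \<partial>lborel \<partial>lborel)"
    unfolding E_pair[OF ij] prod_pair[OF ij] Fc ..
  also have "\<dots> = (\<integral>\<^sup>+t. \<integral>\<^sup>+s. ennreal (F s ^ i * (if s < t then F t - F s else 0) * (F t ^ (j - Suc i) * (1 - F t))) \<partial>lborel \<partial>lborel)"
    by (rule lborel_pair.Fubini') measurable
  also have "\<dots> = (\<integral>\<^sup>+t. (\<integral>\<^sup>+s. ennreal (F s ^ i * (if s < t then F t - F s else 0)) \<partial>lborel) * ennreal (F t ^ (j - Suc i) * (1 - F t)) \<partial>lborel)"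
  proof (rule nn_integral_cong)
    fix t
    have "(\<integral>\<^sup>+s. ennreal (F s ^ i * (if s < t then F t - F s else 0) * (F t ^ (j - Suc i) * (1 - F t))) \<partial>lborel)
       = (\<integral>\<^sup>+s. ennreal (F s ^ i * (if s < t then F t - F s else 0)) * ennreal (F t ^ (j - Suc i) * (1 - F t)) \<partial>lborel)"
    proof (rule nn_integral_cong)
      fix s
      have "0 \<le> F s ^ i * (if s < t then F t - F s else 0)" using Fs[of s] Fmono[of s t] by auto
      moreover have "0 \<le> F t ^ (j - Suc i) * (1 - F t)" using Fs[of t] by auto
      ultimately show "ennreal (F s ^ i * (if s < t then F t - F s else 0) * (F t ^ (j - Suc i) * (1 - F t)))
         = ennreal (F s ^ i * (if s < t then F t - F s else 0)) * ennreal (F t ^ (j - Suc i) * (1 - F t))"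
        by (rule ennreal_mult)
    qed
    also have "\<dots> = (\<integral>\<^sup>+s. ennreal (F s ^ i * (if s < t then F t - F s else 0)) \<partial>lborel) * ennreal (F t ^ (j - Suc i) * (1 - F t))"
      by (rule nn_integral_multc) measurable
    finally show "(\<integral>\<^sup>+s. ennreal (F s ^ i * (if s < t then F t - F s else 0) * (F t ^ (j - Suc i) * (1 - F t))) \<partial>lborel)
       = (\<integral>\<^sup>+s. ennreal (F s ^ i * (if s < t then F t - F s else 0)) \<partial>lborel) * ennreal (F t ^ (j - Suc i) * (1 - F t))" .
  qed
  also have "\<dots> \<le> (\<integral>\<^sup>+t. (ennreal (F t ^ Suc i) * Ei) * ennreal (F t ^ (j - Suc i) * (1 - F t)) \<partial>lborel)"
  proof (intro nn_integral_mono mult_right_mono)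
    fix t
    show "(\<integral>\<^sup>+s. ennreal (F s ^ i * (if s < t then F t - F s else 0)) \<partial>lborel) \<le> ennreal (F t ^ Suc i) * Ei"
      using key_ineq[of m t] by (simp add: m Ei_def)
  qed simp
  also have "\<dots> = (\<integral>\<^sup>+t. Ei * ennreal (F t ^ j * (1 - F t)) \<partial>lborel)"
  proof (rule nn_integral_cong)
    fix t
    have pw: "F t ^ Suc i * (F t ^ (j - Suc i) * (1 - F t)) = F t ^ j * (1 - F t)"
    proof -
      have e: "Suc i + (j - Suc i) = j" using ij by simp
      have "F t ^ Suc i * F t ^ (j - Suc i) = F t ^ j" by (metis power_add e)
      then show ?thesis by (simp add: mult.assoc[symmetric])
    qed
    have "ennreal (F t ^ Suc i) * Ei * ennreal (F t ^ (j - Suc i) * (1 - F t))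
       = Ei * (ennreal (F t ^ Suc i) * ennreal (F t ^ (j - Suc i) * (1 - F t)))" by (simp add: ac_simps)
    also have "ennreal (F t ^ Suc i) * ennreal (F t ^ (j - Suc i) * (1 - F t)) = ennreal (F t ^ Suc i * (F t ^ (j - Suc i) * (1 - F t)))"
      by (rule ennreal_mult[symmetric]) (use Fs[of t] in auto)
    also have "\<dots> = ennreal (F t ^ j * (1 - F t))" unfolding pw ..
    finally show "ennreal (F t ^ Suc i) * Ei * ennreal (F t ^ (j - Suc i) * (1 - F t)) = Ei * ennreal (F t ^ j * (1 - F t))" .
  qed
  also have "\<dots> = Ei * (\<integral>\<^sup>+t. ennreal (F t ^ j * (1 - F t)) \<partial>lborel)"
    by (rule nn_integral_cmult) measurable
  also have "\<dots> = (\<integral>\<^sup>+w. ennreal (pspacing X i w) \<partial>M) * (\<integral>\<^sup>+w. ennreal (pspacing X j w) \<partial>M)"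
    using ij by (simp add: E_single_F Ei_def)
  finally show ?thesis .
qed

lemma cov_neg:
  assumes ij: "1 \<le> i" "i < j" and int1: "integrable mu (\<lambda>x. x)"
  shows "covariance M (pspacing X i) (pspacing X j) \<le> 0"
proof -
  define U where "U = pspacing X i"
  define V where "V = pspacing X j"
  have j1: "1 \<le> j" using ij by simp
  have iU: "integrable M U" unfolding U_def by (rule Zint[OF ij(1) int1])
  have iV: "integrable M V" unfolding V_def by (rule Zint[OF j1 int1])
  have U0: "0 \<le> U w" for w unfolding U_def by (rule psp_nn[OF ij(1)])
  have V0: "0 \<le> V w" for w unfolding V_def by (rule psp_nn[OF j1])
  define a where "a = (\<integral>w. U w \<partial>M)"
  define b where "b = (\<integral>w. V w \<partial>M)"
  have a0: "0 \<le> a" unfolding a_def using U0 by (intro integral_nonneg_AE) auto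
  have b0: "0 \<le> b" unfolding b_def using V0 by (intro integral_nonneg_AE) auto
  have nU: "(\<integral>\<^sup>+w. ennreal (U w) \<partial>M) = ennreal a"
    unfolding a_def using iU U0 by (intro nn_integral_eq_integral) auto
  have nV: "(\<integral>\<^sup>+w. ennreal (V w) \<partial>M) = ennreal b"
    unfolding b_def using iV V0 by (intro nn_integral_eq_integral) auto
  have nUV: "(\<integral>\<^sup>+w. ennreal (U w * V w) \<partial>M) \<le> ennreal (a * b)"
  proof -
    have "(\<integral>\<^sup>+w. ennreal (U w * V w) \<partial>M) = (\<integral>\<^sup>+w. ennreal (U w) * ennreal (V w) \<partial>M)"
      using U0 V0 by (intro nn_integral_cong) (simp add: ennreal_mult)
    also have "\<dots> \<le> ennreal a * ennreal b"
      using E_prod_le[OF ij] nU nV by (simp add: U_def V_def)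
    finally show ?thesis by (simp add: ennreal_mult[OF a0 b0])
  qed
  have mUV: "(\<lambda>w. U w * V w) \<in> borel_measurable M" unfolding U_def V_def by measurable
  have iUV: "integrable M (\<lambda>w. U w * V w)"
    using nUV U0 V0 mUV by (intro integrableI_nonneg) (auto simp: top_unique ennreal_less_top intro: le_less_trans)
  have "(\<integral>w. U w * V w \<partial>M) \<le> a * b"
  proof -
    have "ennreal (\<integral>w. U w * V w \<partial>M) = (\<integral>\<^sup>+w. ennreal (U w * V w) \<partial>M)"
      using iUV U0 V0 by (intro nn_integral_eq_integral[symmetric]) auto
    then have "ennreal (\<integral>w. U w * V w \<partial>M) \<le> ennreal (a * b)" using nUV by simp
    then show ?thesis using a0 b0 by (simp add: ennreal_le_iff)
  qed
  moreover have "covariance M U V = (\<integral>w. U w * V w \<partial>M) - a * b"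
  proof -
    have "covariance M U V = (\<integral>w. U w * V w - a * V w - b * U w + a * b \<partial>M)"
      unfolding covariance_def a_def[symmetric] b_def[symmetric]
      by (intro Bochner_Integration.integral_cong) (simp_all add: algebra_simps)
    also have "\<dots> = (\<integral>w. U w * V w \<partial>M) - a * b - b * a + a * b"
      using iU iV iUV by (simp add: prob_space a_def[symmetric] b_def[symmetric])
    finally show ?thesis by simp
  qed
  ultimately show ?thesis unfolding U_def V_def by simp
qed

end

theorem theorem4p2:
  fixes mu :: "real measure" and F :: "real \<Rightarrow> real"
    and M :: "'a measure" and X :: "nat \<Rightarrow> 'a \<Rightarrow> real"
  assumes dist: "real_distribution mu"
    and F_def: "F = cdf mu"
    and second_moment: "integrable mu (\<lambda>x. x ^ 2)"
    and logconcave: "concave_on {x. 0 < F x \<and> F x < 1} (\<lambda>x. ln (F x))"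
    and no_atom: "(\<exists>x. F x = 1) \<Longrightarrow> measure mu {right_endpoint F} = 0"
    and probM: "prob_space M"
    and indep: "prob_space.indep_vars M (\<lambda>_. borel) X {1..}"
    and distr: "\<And>i. i \<ge> 1 \<Longrightarrow> distr M borel (X i) = mu"
  shows "\<forall>n\<ge>2. \<forall>i\<in>{1..n-1}. \<forall>j\<in>{1..n-1}. i \<noteq> j \<longrightarrow>
           covariance M (pspacing X i) (pspacing X j) \<le> 0"
proof -
  interpret b: both mu F M X
  proof (intro both.intro lcF.intro iidX.intro iidX_axioms.intro)
    show "real_distribution mu" by (rule dist)
    show "F = cdf mu" by (rule F_def)
    show "concave_on {x. 0 < F x \<and> F x < 1} (\<lambda>x. ln (F x))" by (rule logconcave)
    show "(\<exists>x. F x = 1) \<Longrightarrow> measure mu {right_endpoint F} = 0" by (rule no_atom)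
    show "prob_space M" by (rule probM)
    show "real_distribution mu" by (rule dist)
    show "prob_space.indep_vars M (\<lambda>_. borel) X {1..}" by (rule indep)
    show "\<And>i. i \<ge> 1 \<Longrightarrow> distr M borel (X i) = mu" by (rule distr)
  qed
  interpret rd: real_distribution mu by (rule dist)
  have int1: "integrable mu (\<lambda>x. x)"
    by (rule rd.square_integrable_imp_integrable) (use second_moment in auto)
  have sym: "covariance M U V = covariance M V U" for U V
    unfolding covariance_def by (simp add: mult.commute)
  show ?thesis
  proof (intro allI impI ballI)
    fix n i j :: nat assume i: "i \<in> {1..n-1}" and j: "j \<in> {1..n-1}" and ij: "i \<noteq> j"
    show "covariance M (pspacing X i) (pspacing X j) \<le> 0"
    proof (cases "i < j")
      case True thus ?thesis using b.cov_neg[OF _ True int1] i by auto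
    next
      case False
      then have "j < i" using ij by simp
      then show ?thesis using b.cov_neg[OF _ _ int1, of j i] j sym by auto
    qed
  qed
qed

end
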